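(* Let $\mathcal{K}$ be a continuous unitary representation of $\overline{\mathfrak{S}}_\infty$ in a Hilbert space $\mathcal{H}$ and let $k\in\mathbb{N}$. Then the sequence $\{\mathcal{K}((k\;\;N))\}_{N\in\mathbb{N},\,N\neq k}$ converges, as $N\to\infty$, in the weak operator topology to a self-adjoint projection $O_k$.
   Context: $\overline{\mathfrak{S}}_\infty$ is the group of all bijections of $\mathbb{N}$, with the Polish topology in which the subgroups $\mathfrak{S}(n,\infty)=\{s: s(j)=j \text{ for } j=1,\dots,n\}$ form a fundamental system of neighborhoods of the identity; continuity of $\mathcal{K}$ means $\lim_{n\to\infty}\sup_{s\in\mathfrak{S}(n,\infty)}\|\mathcal{K}(s)\eta-\eta\|=0$ for each $\eta\in\mathcal{H}$. $(k\;N)$ denotes the transposition interchanging $k$ and $N$. *)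

theory Defs
  imports "HOL-Analysis.Analysis" "HOL-Combinatorics.Transposition"
begin

text \<open>The infinite symmetric group: all bijections of the natural numbers
  (the paper's index set {1,2,...} is modelled by the type nat).\<close>

definition Sinf :: "(nat \<Rightarrow> nat) set" where
  "Sinf = {s. bij s}"

definition Sinf_stab :: "nat \<Rightarrow> (nat \<Rightarrow> nat) set" where
  "Sinf_stab n = {s. bij s \<and> (\<forall>j<n. s j = j)}"

definition unitary_op :: "('h::real_inner \<Rightarrow> 'h) \<Rightarrow> bool" where
  "unitary_op U \<longleftrightarrow> bounded_linear U \<and> surj U \<and> (\<forall>x y. inner (U x) (U y) = inner x y)"

definition unitary_rep :: "((nat \<Rightarrow> nat) \<Rightarrow> 'h::real_inner \<Rightarrow> 'h) \<Rightarrow> bool" where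
  "unitary_rep K \<longleftrightarrow>
     (\<forall>s\<in>Sinf. unitary_op (K s)) \<and>
     K id = id \<and>
     (\<forall>s\<in>Sinf. \<forall>t\<in>Sinf. K (s \<circ> t) = K s \<circ> K t)"

definition continuous_rep :: "((nat \<Rightarrow> nat) \<Rightarrow> 'h::real_normed_vector \<Rightarrow> 'h) \<Rightarrow> bool" where
  "continuous_rep K \<longleftrightarrow>
     (\<forall>\<eta>. ((\<lambda>n. SUP s\<in>Sinf_stab n. norm (K s \<eta> - \<eta>)) \<longlongrightarrow> 0) sequentially)"

definition selfadjoint_projection :: "('h::real_inner \<Rightarrow> 'h) \<Rightarrow> bool" where
  "selfadjoint_projection P \<longleftrightarrow>
     bounded_linear P \<and> P \<circ> P = P \<and> (\<forall>x y. inner (P x) y = inner x (P y))"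

definition wot_tendsto :: "('i \<Rightarrow> 'h::real_inner \<Rightarrow> 'h) \<Rightarrow> ('h \<Rightarrow> 'h) \<Rightarrow> 'i filter \<Rightarrow> bool" where
  "wot_tendsto A P F \<longleftrightarrow> (\<forall>x y. ((\<lambda>i. inner (A i x) y) \<longlongrightarrow> inner (P x) y) F)"

end

theory Submission
  imports Defs
begin

lemma inner_ext:
  fixes a b :: "'a::real_inner"
  assumes "\<And>y. inner a y = inner b y" shows "a = b"
proof -
  have "inner (a - b) (a - b) = 0" using assms[of "a-b"] by (simp add: inner_diff_left)
  then show ?thesis by simp
qed

lemma riesz_aux:
  fixes f :: "'a::{real_inner,complete_space} \<Rightarrow> real"
  assumes add: "\<And>x y. f (x+y) = f x + f y"
    and sc: "\<And>c x. f (c *\<^sub>R x) = c * f x"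
    and bd: "\<And>x. \<bar>f x\<bar> \<le> C * norm x"
  shows "\<exists>u. \<forall>x. f x = inner u x"
proof -
  have fdiff: "f (x - y) = f x - f y" for x y
    using add[of x "-y"] sc[of "-1" y] by simp
  define Qf where "Qf x = (norm x)^2/2 - f x" for x
  have lb: "Qf x \<ge> -(C^2)/2" for x
  proof -
    have "f x \<le> C * norm x" using bd[of x] by simp
    moreover have "(norm x - C)^2 \<ge> 0" by simp
    ultimately show ?thesis unfolding Qf_def by (simp add: power2_eq_square algebra_simps)
  qed
  define m where "m = Inf (range Qf)"
  have bdd: "bdd_below (range Qf)" using lb by (meson bdd_belowI2)
  have mle: "m \<le> Qf x" for x unfolding m_def using bdd by (simp add: cInf_lower)
  have "\<exists>x. Qf x < m + 1/(Suc n)" for n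
  proof -
    have "Inf (range Qf) < m + 1/Suc n" unfolding m_def by simp
    then show ?thesis using cInf_less_iff[OF _ bdd] by auto
  qed
  then obtain X where X: "\<And>n. Qf (X n) < m + 1/(Suc n)" by metis
  have mid: "Qf x + Qf y - 2 * Qf ((1/2) *\<^sub>R (x + y)) = (norm (x - y))^2 / 4" for x y
  proof -
    have "f ((1/2) *\<^sub>R (x + y)) = (f x + f y)/2" using sc add by simp
    moreover have "(norm ((1/2) *\<^sub>R (x + y)))^2 = (inner x x + 2 * inner x y + inner y y)/4"
      by (simp add: power2_norm_eq_inner inner_add_left inner_add_right inner_commute algebra_simps)
    moreover have "(norm (x - y))^2 = inner x x - 2 * inner x y + inner y y"
      by (simp add: power2_norm_eq_inner inner_diff_left inner_diff_right inner_commute algebra_simps)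
    ultimately show ?thesis unfolding Qf_def by (simp add: power2_norm_eq_inner algebra_simps)
  qed
  have cd: "(norm (X a - X b))^2 < 4 * (1/Suc a + 1/Suc b)" for a b
  proof -
    have "(norm (X a - X b))^2 / 4 < 1/Suc a + 1/Suc b"
      using mid[of "X a" "X b"] mle[of "(1/2) *\<^sub>R (X a + X b)"] X[of a] X[of b] by linarith
    then show ?thesis by simp
  qed
  have "Cauchy X"
  proof (rule metric_CauchyI)
    fix e :: real assume e: "e > 0"
    obtain N :: nat where N: "8 / e^2 < N" using reals_Archimedean2 by blast
    have "1 / Suc N < e^2/8" using N e
    proof -
      have e2: "e^2 > 0" using e by simp
      have "8 < e^2 * N" using N e2 by (simp add: divide_less_eq mult.commute)
      also have "\<dots> < e^2 * Suc N" using e2 by simp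
      finally show ?thesis using e2 by (simp add: divide_simps mult.commute)
    qed
    show "\<exists>M. \<forall>m\<ge>M. \<forall>n\<ge>M. dist (X m) (X n) < e"
    proof (intro exI allI impI)
      fix a b assume a: "a \<ge> N" and b: "b \<ge> N"
      have "1/Suc a \<le> 1/Suc N" "1/Suc b \<le> 1/Suc N" using a b by (simp_all add: frac_le)
      moreover have "\<And>p q r s n::real. p \<le> r \<Longrightarrow> q \<le> r \<Longrightarrow> n < 4*(p+q) \<Longrightarrow> r < s/8 \<Longrightarrow> n < s"
        by (simp add: field_simps)
      ultimately have "(norm (X a - X b))^2 < e^2" using cd[of a b] \<open>1 / Suc N < e^2/8\<close> by blast
      then show "dist (X a) (X b) < e" using e by (simp add: dist_norm power_less_imp_less_base)
    qed
  qed
  then obtain u where u: "X \<longlonglongrightarrow> u" using Cauchy_convergent_iff convergent_def by blast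
  have fX: "(\<lambda>n. f (X n)) \<longlonglongrightarrow> f u"
  proof -
    have "(\<lambda>n. f (X n) - f u) \<longlonglongrightarrow> 0"
    proof (rule Lim_null_comparison)
      show "\<forall>\<^sub>F n in sequentially. norm (f (X n) - f u) \<le> C * norm (X n - u)"
        by (intro always_eventually allI) (metis bd fdiff real_norm_def)
      have "(\<lambda>n. norm (X n - u)) \<longlonglongrightarrow> 0" using u by (simp add: LIM_zero tendsto_norm_zero)
      then show "(\<lambda>n. C * norm (X n - u)) \<longlonglongrightarrow> 0" using tendsto_mult_right_zero by blast
    qed
    then show ?thesis by (simp add: LIM_zero_iff)
  qed
  have PX1: "(\<lambda>n. Qf (X n)) \<longlonglongrightarrow> Qf u"
    unfolding Qf_def by (auto intro!: tendsto_intros u fX)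
  have PX2: "(\<lambda>n. Qf (X n)) \<longlonglongrightarrow> m"
  proof (rule tendsto_sandwich[of "\<lambda>n. m" _ _ "\<lambda>n. m + 1/Suc n"])
    show "\<forall>\<^sub>F n in sequentially. m \<le> Qf (X n)" using mle by simp
    show "\<forall>\<^sub>F n in sequentially. Qf (X n) \<le> m + 1/Suc n" by (intro always_eventually allI) (metis X less_imp_le)
    show "(\<lambda>n. m) \<longlonglongrightarrow> m" by simp
    have "(\<lambda>n. 1 / real (Suc n)) \<longlonglongrightarrow> 0" using LIMSEQ_inverse_real_of_nat by (simp add: inverse_eq_divide)
    then show "(\<lambda>n. m + 1/Suc n) \<longlonglongrightarrow> m" using tendsto_add[OF tendsto_const, of _ 0 sequentially m] by simp
  qed
  have umin: "Qf u \<le> Qf z" for z using LIMSEQ_unique[OF PX1 PX2] mle by simp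
  show ?thesis
  proof (intro exI allI)
    fix x
    define a where "a = inner u x - f x"
    define b where "b = (norm x)^2/2"
    have b0: "b \<ge> 0" unfolding b_def by simp
    have key: "t * a + t^2 * b \<ge> 0" for t
    proof -
      have "(norm (u + t *\<^sub>R x))^2 = (norm u)^2 + 2 * t * inner u x + t^2 * (norm x)^2"
        by (simp only: power2_norm_eq_inner) (simp add: inner_add_left inner_add_right inner_commute algebra_simps power2_eq_square)
      moreover have "f (u + t *\<^sub>R x) = f u + t * f x" using add sc by simp
      ultimately have "Qf (u + t *\<^sub>R x) - Qf u = t * a + t^2 * b"
        unfolding Qf_def a_def b_def by (simp add: algebra_simps)
      then show ?thesis using umin[of "u + t *\<^sub>R x"] by simp
    qed
    have "(-a/(b+1)) * a + (-a/(b+1))^2 * b \<ge> 0" by (rule key)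
    moreover have "(-a/(b+1)) * a + (-a/(b+1))^2 * b = - (a^2/(b+1)^2)"
    proof -
      have "b + 1 \<noteq> 0" using b0 by simp
      have gen: "(-a/d)*a + (-a/d)^2*(d-1) = -(a^2/d^2)" if "d \<noteq> 0" for d :: real
        using that by (simp add: field_simps power2_eq_square)
      show ?thesis using gen[OF \<open>b + 1 \<noteq> 0\<close>] by simp
    qed
    ultimately have "a^2/(b+1)^2 \<le> 0" by simp
    then have "a = 0" using b0
      by (smt (verit, best) divide_pos_pos power2_less_eq_zero_iff zero_less_power)
    then show "f x = inner u x" unfolding a_def by simp
  qed
qed
lemma conj_tr: "k \<noteq> N \<Longrightarrow> k \<noteq> M \<Longrightarrow> N \<noteq> M \<Longrightarrow>
  Transposition.transpose N M \<circ> Transposition.transpose k N \<circ> Transposition.transpose N M = Transposition.transpose k M"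
  by (rule ext) (simp add: Transposition.transpose_def)
lemma comm_tr: "k \<noteq> N \<Longrightarrow> k \<noteq> M \<Longrightarrow> N \<noteq> M \<Longrightarrow>
  Transposition.transpose k N \<circ> Transposition.transpose k M = Transposition.transpose k M \<circ> Transposition.transpose M N"
  by (rule ext) (simp add: Transposition.transpose_def)

theorem lemma4:
  fixes K :: "(nat \<Rightarrow> nat) \<Rightarrow> 'h::{real_inner, complete_space} \<Rightarrow> 'h"
    and k :: nat
  assumes "unitary_rep K"
    and "continuous_rep K"
  shows "\<exists>P. selfadjoint_projection P \<and>
           wot_tendsto (\<lambda>N. K (Transposition.transpose k N)) P sequentially"
proof -
  define T where "T a b = K (Transposition.transpose a b)" for a b
  have Sin: "Transposition.transpose a b \<in> Sinf" for a b :: nat by (simp add: Sinf_def)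
  have Uop: "unitary_op (T a b)" for a b using assms(1) Sin unfolding unitary_rep_def T_def by blast
  have U: "inner (T a b x) (T a b y) = inner x y" for a b x y using Uop unfolding unitary_op_def by blast
  have BL: "bounded_linear (T a b)" for a b using Uop unfolding unitary_op_def by blast
  have Kcomp: "K (s \<circ> t) = K s \<circ> K t" if "bij s" "bij t" for s t
    using assms(1) that unfolding unitary_rep_def Sinf_def by blast
  have Inv: "T a b (T a b x) = x" for a b x
  proof -
    have "K (Transposition.transpose a b \<circ> Transposition.transpose a b) = id"
      using assms(1) unfolding unitary_rep_def by simp
    then show ?thesis using Kcomp[of "Transposition.transpose a b" "Transposition.transpose a b"]
      unfolding T_def by (metis bij_transpose comp_apply id_apply)
  qed
  have SA: "inner (T a b x) y = inner x (T a b y)" for a b x y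
    by (metis Inv U)
  have Nm: "norm (T a b x) = norm x" for a b x
    using U[of a b x x] by (simp add: norm_eq_sqrt_inner)
  have Tdiff: "T a b (x - y) = T a b x - T a b y" for a b x y
    using BL[of a b] by (simp add: linear_simps)
  define e where "e x n = (SUP s\<in>Sinf_stab n. norm (K s x - x))" for x n
  have E1: "norm (T a b x - x) \<le> e x n" if "n \<le> a" "n \<le> b" for a b x n
  proof -
    have mem: "Transposition.transpose a b \<in> Sinf_stab n"
      using that by (simp add: Sinf_stab_def Transposition.transpose_def)
    have "norm (K s x - x) \<le> 2 * norm x" if "s \<in> Sinf_stab n" for s
    proof -
      have "unitary_op (K s)" using assms(1) that unfolding unitary_rep_def Sinf_def Sinf_stab_def by blast
      then have "norm (K s x) = norm x"
        unfolding unitary_op_def by (simp add: norm_eq_sqrt_inner)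
      then show ?thesis using norm_triangle_ineq4[of "K s x" x] by simp
    qed
    then have "bdd_above ((\<lambda>s. norm (K s x - x)) ` Sinf_stab n)" by (meson bdd_aboveI2)
    then show ?thesis unfolding e_def T_def using cSUP_upper[OF mem] by blast
  qed
  have e0: "e x n \<ge> 0" for x n using E1[where a=n and b=n and x=x and n=n] by (meson norm_ge_zero order_trans le_refl)
  have E2: "(\<lambda>n. e x n) \<longlonglongrightarrow> 0" for x
    using assms(2) unfolding continuous_rep_def e_def by blast
  define A where "A N = T k N" for N
  have Aconj: "A M x = T N M (A N (T N M x))" if "k \<noteq> N" "k \<noteq> M" "N \<noteq> M" for N M x
  proof -
    have "A M = K (Transposition.transpose N M \<circ> Transposition.transpose k N \<circ> Transposition.transpose N M)"
      unfolding A_def T_def using conj_tr[OF that] by simp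
    also have "\<dots> = T N M \<circ> A N \<circ> T N M"
      unfolding A_def T_def by (simp add: Kcomp bij_comp)
    finally show ?thesis by simp
  qed
  have Acomm: "A N (A M x) = A M (T M N x)" if "k \<noteq> N" "k \<noteq> M" "N \<noteq> M" for N M x
  proof -
    have "A N \<circ> A M = A M \<circ> T M N"
      unfolding A_def T_def using comm_tr[OF that] Kcomp by (metis bij_transpose)
    then show ?thesis by (metis comp_apply)
  qed
  have CS: "\<bar>inner x y\<bar> \<le> norm x * norm y" for x y :: 'h by (rule Cauchy_Schwarz_ineq2)
  have cauchy_est: "\<bar>inner (A M x) y - inner (A N x) y\<bar> \<le> e x n * norm y + norm x * e y n"
    if "k < n" "n \<le> N" "n \<le> M" for N M n x y
  proof (cases "N = M")
    case True then show ?thesis using e0[of x n] e0[of y n] by simp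
  next
    case False
    have d: "k \<noteq> N" "k \<noteq> M" "N \<noteq> M" using that False by auto
    define x' where "x' = T N M x"
    define y' where "y' = T N M y"
    have "inner (A M x) y = inner (A N x') y'"
      unfolding x'_def y'_def using Aconj[OF d] SA by metis
    then have "inner (A M x) y - inner (A N x) y = inner (A N (x' - x)) y' + inner (A N x) (y' - y)"
      unfolding A_def by (simp add: Tdiff inner_diff_left inner_diff_right)
    moreover have "\<bar>inner (A N (x' - x)) y'\<bar> \<le> e x n * norm y"
    proof -
      have "\<bar>inner (A N (x' - x)) y'\<bar> \<le> norm (x' - x) * norm y"
        using CS[of "A N (x' - x)" y'] unfolding A_def y'_def by (simp add: Nm)
      also have "\<dots> \<le> e x n * norm y"
        unfolding x'_def using E1[where a=N and b=M and x=x and n=n] that by (simp add: mult_right_mono)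
      finally show ?thesis .
    qed
    moreover have "\<bar>inner (A N x) (y' - y)\<bar> \<le> norm x * e y n"
    proof -
      have "\<bar>inner (A N x) (y' - y)\<bar> \<le> norm x * norm (y' - y)"
        using CS[of "A N x" "y' - y"] unfolding A_def by (simp add: Nm)
      also have "\<dots> \<le> norm x * e y n"
        unfolding y'_def using E1[where a=N and b=M and x=y and n=n] that by (simp add: mult_left_mono)
      finally show ?thesis .
    qed
    ultimately show ?thesis by linarith
  qed
  have conv: "convergent (\<lambda>N. inner (A N x) y)" for x y
  proof -
    have "Cauchy (\<lambda>N. inner (A N x) y)"
    proof (rule metric_CauchyI)
      fix eps :: real assume eps: "eps > 0"
      have "(\<lambda>n. e x n * norm y + norm x * e y n) \<longlonglongrightarrow> 0 * norm y + norm x * 0"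
        by (intro tendsto_intros E2)
      then have "\<forall>\<^sub>F n in sequentially. e x n * norm y + norm x * e y n < eps"
        using eps by (simp add: order_tendsto_iff)
      then obtain n0 where n0: "\<And>n. n \<ge> n0 \<Longrightarrow> e x n * norm y + norm x * e y n < eps"
        unfolding eventually_sequentially by blast
      define n where "n = max n0 (Suc k)"
      show "\<exists>M0. \<forall>M\<ge>M0. \<forall>N\<ge>M0. dist (inner (A M x) y) (inner (A N x) y) < eps"
      proof (intro exI allI impI)
        fix M N assume "n \<le> M" "n \<le> N"
        then show "dist (inner (A M x) y) (inner (A N x) y) < eps"
          using cauchy_est[of n N M x y] n0[of n] unfolding n_def dist_real_def by fastforce
      qed
    qed
    then show ?thesis using Cauchy_convergent_iff by blast
  qed
  define B where "B x y = lim (\<lambda>N. inner (A N x) y)" for x y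
  have BT: "(\<lambda>N. inner (A N x) y) \<longlonglongrightarrow> B x y" for x y
    unfolding B_def using conv convergent_LIMSEQ_iff by blast
  have Badd: "B x (y1 + y2) = B x y1 + B x y2" for x y1 y2
    using LIMSEQ_unique[OF BT[of x "y1+y2"]] tendsto_add[OF BT[of x y1] BT[of x y2]]
    by (simp add: inner_add_right)
  have Bsc: "B x (c *\<^sub>R y) = c * B x y" for x y c
    using LIMSEQ_unique[OF BT[of x "c *\<^sub>R y"]] tendsto_mult_left[OF BT[of x y], of c]
    by simp
  have Bsym: "B x y = B y x" for x y
  proof -
    have "inner (A N x) y = inner (A N y) x" for N
      unfolding A_def using SA by (metis inner_commute)
    then show ?thesis using LIMSEQ_unique[OF BT[of x y]] BT[of y x] by simp
  qed
  have Bbd: "\<bar>B x y\<bar> \<le> norm x * norm y" for x y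
  proof (rule tendsto_upperbound[OF tendsto_rabs[OF BT[of x y]]])
    show "\<forall>\<^sub>F N in sequentially. \<bar>inner (A N x) y\<bar> \<le> norm x * norm y"
      by (intro always_eventually allI) (metis CS Nm A_def)
  qed simp
  have "\<exists>p. \<forall>y. B x y = inner p y" for x
  proof (rule riesz_aux[of "B x" "norm x"])
    show "\<bar>B x y\<bar> \<le> norm x * norm y" for y by (rule Bbd)
  qed (simp_all add: Badd Bsc)
  then obtain P where PB: "\<And>x y. B x y = inner (P x) y" by metis
  have Padd: "P (x1 + x2) = P x1 + P x2" for x1 x2
    by (rule inner_ext) (metis Badd Bsym PB inner_add_left)
  have Psc: "P (c *\<^sub>R x) = c *\<^sub>R P x" for c x
    by (rule inner_ext) (metis Bsc Bsym PB inner_scaleR_left)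
  have Pnorm: "norm (P x) \<le> norm x" for x
  proof (cases "norm (P x) = 0")
    case True then show ?thesis by simp
  next
    case False
    have "norm (P x) * norm (P x) = B x (P x)" using PB by (simp add: norm_eq_sqrt_inner)
    also have "\<dots> \<le> norm x * norm (P x)" using Bbd[of x "P x"] by simp
    finally show ?thesis using False by simp
  qed
  have BLP: "bounded_linear P"
    by (rule bounded_linear_intro[of _ 1]) (auto simp: Padd Psc Pnorm)
  have PSA: "inner (P x) y = inner x (P y)" for x y
    by (metis PB Bsym inner_commute)
  have PP: "P (P x) = P x" for x
  proof (rule inner_ext)
    fix z
    have L1: "(\<lambda>M. inner (A M x) (P z)) \<longlonglongrightarrow> inner (P x) (P z)" using BT PB by metis
    have est: "\<bar>B z (A M x) - inner z (A M x)\<bar> \<le> norm z * e x M" if "k < M" for M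
    proof (rule tendsto_upperbound[OF tendsto_rabs[OF tendsto_diff[OF BT[of z "A M x"] tendsto_const]]])
      show "\<forall>\<^sub>F N in sequentially. \<bar>inner (A N z) (A M x) - inner z (A M x)\<bar> \<le> norm z * e x M"
        unfolding eventually_sequentially
      proof (intro exI allI impI)
        fix N assume "Suc M \<le> N"
        then have d: "k \<noteq> N" "k \<noteq> M" "N \<noteq> M" using that by auto
        have "inner (A N z) (A M x) = inner z (A M (T M N x))"
          unfolding A_def using SA Acomm[OF d] unfolding A_def by metis
        then have "inner (A N z) (A M x) - inner z (A M x) = inner z (A M (T M N x - x))"
          unfolding A_def by (simp add: Tdiff inner_diff_right)
        also have "\<bar>\<dots>\<bar> \<le> norm z * norm (T M N x - x)"
          using CS unfolding A_def by (metis Nm)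
        also have "\<dots> \<le> norm z * e x M"
          using E1[where a=M and b=N and x=x and n=M] \<open>Suc M \<le> N\<close> by (simp add: mult_left_mono)
        finally show "\<bar>inner (A N z) (A M x) - inner z (A M x)\<bar> \<le> norm z * e x M" .
      qed
    qed simp
    have L2: "(\<lambda>M. inner (A M x) (P z)) \<longlonglongrightarrow> B x z"
    proof -
      have eq: "inner (A M x) (P z) = (B z (A M x) - inner z (A M x)) + inner (A M x) z" for M
        by (simp add: PB inner_commute)
      have "(\<lambda>M. B z (A M x) - inner z (A M x)) \<longlonglongrightarrow> 0"
      proof (rule Lim_null_comparison)
        show "\<forall>\<^sub>F M in sequentially. norm (B z (A M x) - inner z (A M x)) \<le> norm z * e x M"
          unfolding eventually_sequentially using est by (metis Suc_le_eq real_norm_def)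
        show "(\<lambda>M. norm z * e x M) \<longlonglongrightarrow> 0" using tendsto_mult_right_zero[OF E2] by blast
      qed
      from tendsto_add[OF this BT[of x z]] show ?thesis unfolding eq by simp
    qed
    have "inner (P (P x)) z = inner (P x) (P z)" by (rule PSA)
    also have "\<dots> = B x z" using LIMSEQ_unique[OF L1 L2] .
    also have "\<dots> = inner (P x) z" by (rule PB)
    finally show "inner (P (P x)) z = inner (P x) z" .
  qed
  show ?thesis
  proof (intro exI conjI)
    show "selfadjoint_projection P"
      unfolding selfadjoint_projection_def using BLP PP PSA by auto
    show "wot_tendsto (\<lambda>N. K (Transposition.transpose k N)) P sequentially"
      unfolding wot_tendsto_def using BT PB unfolding A_def T_def by metis
  qed
qed

end
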